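(* Let $(W,S)$ be a chordal Coxeter system, let $(S_1,S_0,S_2)$ be a separation of $S$ such that $S_0$ is a simplex, let $d\in\langle S_2\rangle$ be such that $d^{-1}S_0d\subseteq S_2$, and let $S_*=S_1\cup dS_2d^{-1}$. Then the twisted system $(W,S_* )$ is chordal.
   Context: A Coxeter system $(W,S)$: $W=\langle S\mid (st)^{m(s,t)}\ (m(s,t)<\infty)\rangle$, $m(s,s)=1$, $m(s,t)=m(t,s)\in\{2,\dots,\infty\}$. $\Gamma(W,S)$: labeled graph on $S$ with edge $\{s,t\}$ labeled $m(s,t)$ iff $s\ne t$, $m(s,t)<\infty$; chordal: every cycle of length $\ge4$ in its underlying graph has a chord. A simplex is $A\subseteq S$ with $m(s,t)<\infty$ for all $s,t\in A$. A separation of $S$ is a triple $(S_1,S_0,S_2)$ with $S=S_1\cup S_2$, $S_0=S_1\cap S_2$, $S_1-S_0\ne\emptyset\ne S_2-S_0$, and $m(s,t)=\infty$ for all $s\in S_1-S_0$, $t\in S_2-S_0$. (Under these hypotheses $S_*$ is a set of Coxeter generators of $W$.) *)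

theory Defs
  imports "HOL-Algebra.Algebra"
begin

text \<open>Coxeter exponent m(s,t): the order of s t in W; the value 0 encodes m = infinity.\<close>
definition cox_m :: "('a, 'b) monoid_scheme \<Rightarrow> 'a \<Rightarrow> 'a \<Rightarrow> nat" where
  "cox_m G s t = group.ord G (s \<otimes>\<^bsub>G\<^esub> t)"

definition cox_finite :: "('a, 'b) monoid_scheme \<Rightarrow> 'a \<Rightarrow> 'a \<Rightarrow> bool" where
  "cox_finite G s t \<longleftrightarrow> cox_m G s t \<noteq> 0"

definition word_prod :: "('a, 'b) monoid_scheme \<Rightarrow> 'a list \<Rightarrow> 'a" where
  "word_prod G w = foldr (\<lambda>x y. x \<otimes>\<^bsub>G\<^esub> y) w \<one>\<^bsub>G\<^esub>"

definition alt_word :: "'a \<Rightarrow> 'a \<Rightarrow> nat \<Rightarrow> 'a list" where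
  "alt_word s t n = map (\<lambda>i. if even i then s else t) [0..<n]"

text \<open>Word equivalence in the abstract Coxeter group
  <S | s^2, (st)^m(s,t) for m(s,t) finite> (as monoid presentation; each
  generator is its own inverse, so this is the group presentation).\<close>
inductive cox_eq :: "('a, 'b) monoid_scheme \<Rightarrow> 'a set \<Rightarrow> 'a list \<Rightarrow> 'a list \<Rightarrow> bool"
  for G S where
  refl: "cox_eq G S w w"
| sym: "cox_eq G S u v \<Longrightarrow> cox_eq G S v u"
| trans: "cox_eq G S u v \<Longrightarrow> cox_eq G S v w \<Longrightarrow> cox_eq G S u w"
| ctxt: "cox_eq G S u v \<Longrightarrow> cox_eq G S (x @ u @ y) (x @ v @ y)"
| sq: "s \<in> S \<Longrightarrow> cox_eq G S [s, s] []"
| braid: "s \<in> S \<Longrightarrow> t \<in> S \<Longrightarrow> cox_finite G s t \<Longrightarrow>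
           cox_eq G S (alt_word s t (2 * cox_m G s t)) []"

text \<open>(W,S) is a Coxeter system: S is a generating set of involutions of the group W
  and the canonical surjection from the group presented by
  <S | (st)^m(s,t), m(s,t) finite>, m(s,s)=1, m(s,t) = order of st, is injective,
  i.e. every word over S that is trivial in W is trivial in the presented group.\<close>
definition coxeter_system :: "('a, 'b) monoid_scheme \<Rightarrow> 'a set \<Rightarrow> bool" where
  "coxeter_system G S \<longleftrightarrow> group G \<and> S \<subseteq> carrier G \<and>
     (\<forall>s\<in>S. s \<noteq> \<one>\<^bsub>G\<^esub> \<and> s \<otimes>\<^bsub>G\<^esub> s = \<one>\<^bsub>G\<^esub>) \<and>
     generate G S = carrier G \<and>
     (\<forall>w. set w \<subseteq> S \<longrightarrow> word_prod G w = \<one>\<^bsub>G\<^esub> \<longrightarrow> cox_eq G S w [])"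

definition cox_adj :: "('a, 'b) monoid_scheme \<Rightarrow> 'a \<Rightarrow> 'a \<Rightarrow> bool" where
  "cox_adj G s t \<longleftrightarrow> s \<noteq> t \<and> cox_finite G s t"

definition cox_chordal :: "('a, 'b) monoid_scheme \<Rightarrow> 'a set \<Rightarrow> bool" where
  "cox_chordal G S \<longleftrightarrow>
     (\<forall>vs. distinct vs \<and> length vs \<ge> 4 \<and> set vs \<subseteq> S \<and>
        (\<forall>i < length vs. cox_adj G (vs ! i) (vs ! ((i + 1) mod length vs)))
      \<longrightarrow> (\<exists>i j. i < length vs \<and> j < length vs \<and> i \<noteq> j \<and>
              j \<noteq> (i + 1) mod length vs \<and> i \<noteq> (j + 1) mod length vs \<and>
              cox_adj G (vs ! i) (vs ! j)))"

definition cox_simplex :: "('a, 'b) monoid_scheme \<Rightarrow> 'a set \<Rightarrow> 'a set \<Rightarrow> bool" where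
  "cox_simplex G S A \<longleftrightarrow> A \<subseteq> S \<and> (\<forall>s\<in>A. \<forall>t\<in>A. cox_finite G s t)"

definition cox_separation ::
  "('a, 'b) monoid_scheme \<Rightarrow> 'a set \<Rightarrow> 'a set \<Rightarrow> 'a set \<Rightarrow> 'a set \<Rightarrow> bool" where
  "cox_separation G S S1 S0 S2 \<longleftrightarrow>
     S = S1 \<union> S2 \<and> S0 = S1 \<inter> S2 \<and> S1 - S0 \<noteq> {} \<and> S2 - S0 \<noteq> {} \<and>
     (\<forall>s \<in> S1 - S0. \<forall>t \<in> S2 - S0. \<not> cox_finite G s t)"

end

theory Submission
  imports Defs
begin

context group begin

lemma inv_cancel_left: "g \<in> carrier G \<Longrightarrow> y \<in> carrier G \<Longrightarrow> inv g \<otimes> (g \<otimes> y) = y"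
  by (simp add: m_assoc[symmetric])

lemma conj_pow:
  assumes "g \<in> carrier G" "x \<in> carrier G"
  shows "(g \<otimes> x \<otimes> inv g) [^] (n::nat) = g \<otimes> x [^] n \<otimes> inv g"
proof (induction n)
  case 0 then show ?case using assms by simp
next
  case (Suc n)
  have "(g \<otimes> x \<otimes> inv g) [^] Suc n = (g \<otimes> x [^] n \<otimes> inv g) \<otimes> (g \<otimes> x \<otimes> inv g)"
    using Suc by simp
  also have "\<dots> = g \<otimes> (x [^] n \<otimes> x) \<otimes> inv g" using assms by (simp add: m_assoc inv_cancel_left)
  finally show ?case by simp
qed

lemma ord_conj:
  assumes "g \<in> carrier G" "x \<in> carrier G"
  shows "ord (g \<otimes> x \<otimes> inv g) = ord x"
proof -
  have "\<And>n. (g \<otimes> x \<otimes> inv g) [^] (n::nat) = \<one> \<longleftrightarrow> x [^] n = \<one>"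
  proof -
    fix n
    have "(g \<otimes> x \<otimes> inv g) [^] (n::nat) = \<one> \<longleftrightarrow> g \<otimes> x [^] n \<otimes> inv g = g \<otimes> \<one> \<otimes> inv g"
      using assms by (simp add: conj_pow)
    also have "\<dots> \<longleftrightarrow> x [^] n = \<one>" using assms
      by (metis inv_closed l_cancel nat_pow_closed one_closed r_cancel m_closed)
    finally show "(g \<otimes> x \<otimes> inv g) [^] (n::nat) = \<one> \<longleftrightarrow> x [^] n = \<one>" .
  qed
  then show ?thesis using assms by (simp add: ord_unique pow_eq_id)
qed

lemma ord_swap:
  assumes "a \<in> carrier G" "b \<in> carrier G"
  shows "ord (a \<otimes> b) = ord (b \<otimes> a)"
proof -
  have "b \<otimes> a = b \<otimes> (a \<otimes> b) \<otimes> inv b" using assms by (simp add: m_assoc)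
  then show ?thesis using assms ord_conj by simp
qed

end

lemma word_prod_Nil[simp]: "word_prod G [] = \<one>\<^bsub>G\<^esub>" by (simp add: word_prod_def)
lemma word_prod_Cons[simp]: "word_prod G (x # w) = x \<otimes>\<^bsub>G\<^esub> word_prod G w" by (simp add: word_prod_def)

context group begin

lemma pow_comm1: "x \<in> carrier G \<Longrightarrow> x \<otimes> x [^] (n::nat) = x [^] n \<otimes> x"
  by (metis nat_pow_Suc nat_pow_Suc2)

lemma word_prod_closed: "set w \<subseteq> carrier G \<Longrightarrow> word_prod G w \<in> carrier G"
  by (induction w) auto

lemma word_prod_append:
  "set u \<subseteq> carrier G \<Longrightarrow> set v \<subseteq> carrier G \<Longrightarrow> word_prod G (u @ v) = word_prod G u \<otimes> word_prod G v"
  by (induction u) (auto simp: m_assoc word_prod_closed)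

lemma word_prod_concat_replicate:
  "set w \<subseteq> carrier G \<Longrightarrow> word_prod G (concat (replicate n w)) = word_prod G w [^] n"
proof (induction n)
  case 0 then show ?case by simp
next
  case (Suc n)
  have "set (concat (replicate n w)) \<subseteq> carrier G" using Suc.prems by auto
  then show ?case using Suc by (simp add: word_prod_append word_prod_closed pow_comm1)
qed

lemma generate_word:
  assumes "H \<subseteq> carrier G" "\<forall>h\<in>H. h \<otimes> h = \<one>" "g \<in> generate G H"
  shows "\<exists>w. set w \<subseteq> H \<and> word_prod G w = g"
  using assms(3)
proof (induction rule: generate.induct)
  case one then show ?case by (intro exI[of _ "[]"]) simp
next
  case (incl h) then show ?case using assms by (intro exI[of _ "[h]"]) auto
next
  case (inv h)
  have "inv h = h" using assms inv by (metis inv_char subsetD)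
  then show ?case using assms inv by (intro exI[of _ "[h]"]) auto
next
  case (eng h1 h2)
  then obtain w1 w2 where "set w1 \<subseteq> H" "word_prod G w1 = h1" "set w2 \<subseteq> H" "word_prod G w2 = h2" by blast
  then show ?case using assms by (intro exI[of _ "w1 @ w2"]) (auto simp: word_prod_append)
qed

end

lemma upt_shift2: "[0..<Suc (Suc n)] = 0 # 1 # map (\<lambda>i. i + 2) [0..<n]"
  by (induction n) auto

lemma alt_word_SucSuc: "alt_word s t (Suc (Suc n)) = s # t # alt_word s t n"
  unfolding alt_word_def upt_shift2 by simp

lemma (in group) word_prod_alt_word:
  assumes "s \<in> carrier G" "t \<in> carrier G"
  shows "word_prod G (alt_word s t (2 * k)) = (s \<otimes> t) [^] k"
proof (induction k)
  case 0 then show ?case by (simp add: alt_word_def)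
next
  case (Suc k)
  have "alt_word s t (2 * Suc k) = s # t # alt_word s t (2 * k)"
    using alt_word_SucSuc by (metis mult_Suc_right add_2_eq_Suc)
  then show ?case using Suc assms by (simp add: m_assoc[symmetric] pow_comm1)
qed



lemma sum_trig_zero:
  fixes m :: nat and phi :: real
  assumes m: "m \<ge> 2"
  shows "(\<Sum>j<m. cos (phi + real j * (2 * (pi / m)))) = 0"
    and "(\<Sum>j<m. sin (phi + real j * (2 * (pi / m)))) = 0"
proof -
  define th where "th = pi / m"
  have th0: "0 < th" using m by (simp add: th_def)
  have th1: "th < pi" using m by (simp add: th_def field_simps)
  have sth: "sin th > 0" using th0 th1 sin_gt_zero by blast
  have mth: "real m * (2 * th) = 2 * pi" using m by (simp add: th_def)
  define g where "g j = sin (phi - th + real j * (2 * th))" for j :: nat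
  define h where "h j = cos (phi - th + real j * (2 * th))" for j :: nat
  have g: "g (Suc j) - g j = 2 * sin th * cos (phi + real j * (2 * th))" for j
  proof -
    have "g (Suc j) = sin ((phi + real j * (2 * th)) + th)" unfolding g_def by (simp add: algebra_simps)
    moreover have "g j = sin ((phi + real j * (2 * th)) - th)" unfolding g_def by (simp add: algebra_simps)
    ultimately show ?thesis by (simp add: sin_add sin_diff)
  qed
  have h: "h j - h (Suc j) = 2 * sin th * sin (phi + real j * (2 * th))" for j
  proof -
    have "h (Suc j) = cos ((phi + real j * (2 * th)) + th)" unfolding h_def by (simp add: algebra_simps)
    moreover have "h j = cos ((phi + real j * (2 * th)) - th)" unfolding h_def by (simp add: algebra_simps)
    ultimately show ?thesis by (simp add: cos_add cos_diff)
  qed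
  have gm: "g m = g 0" unfolding g_def mth by simp
  have hm: "h m = h 0" unfolding h_def mth by simp
  have "2 * sin th * (\<Sum>j<m. cos (phi + real j * (2 * th))) = (\<Sum>j<m. g (Suc j) - g j)"
    by (simp add: g sum_distrib_left)
  also have "\<dots> = 0" using gm by (simp add: sum_lessThan_telescope)
  finally show "(\<Sum>j<m. cos (phi + real j * (2 * (pi / m)))) = 0" using sth by (simp add: th_def)
  have "2 * sin th * (\<Sum>j<m. sin (phi + real j * (2 * th))) = - (\<Sum>j<m. h (Suc j) - h j)"
    by (simp add: h[symmetric] sum_distrib_left sum_negf[symmetric])
  also have "\<dots> = 0" using hm by (simp add: sum_lessThan_telescope)
  finally show "(\<Sum>j<m. sin (phi + real j * (2 * (pi / m)))) = 0" using sth by (simp add: th_def)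
qed

definition sg :: "('a \<Rightarrow> 'a \<Rightarrow> real) \<Rightarrow> 'a \<Rightarrow> ('a \<Rightarrow> real) \<Rightarrow> ('a \<Rightarrow> real)" where
  "sg K x f = (\<lambda>u. f u - 2 * K x u * f x)"

lemma dihedral_relation:
  fixes K :: "'a \<Rightarrow> 'a \<Rightarrow> real" and m :: nat
  assumes m: "m \<ge> 2" and Kaa: "K a a = 1" and Kbb: "K b b = 1"
    and Kab: "K a b = - cos (pi / m)" and Kba: "K b a = - cos (pi / m)"
  shows "((sg K a \<circ> sg K b) ^^ m) f = f"
proof -
  define th where "th = pi / m"
  define C where "C = cos th"
  have th0: "0 < th" using m by (simp add: th_def)
  have th1: "th < pi" using m by (simp add: th_def field_simps)
  have sth: "sin th > 0" using th0 th1 sin_gt_zero by blast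
  define p where "p = f a"
  define q where "q = f b"
  define B where "B = (q + p * C) / sin th"
  define w where "w n = - p * cos (real n * th) + B * sin (real n * th)" for n :: nat
  have w0: "w 0 = - p" by (simp add: w_def)
  have w1: "w 1 = q" using sth by (simp add: w_def B_def C_def field_simps)
  have wrec: "w (Suc (Suc n)) = 2 * C * w (Suc n) - w n" for n
  proof -
    define x where "x = real (Suc n) * th"
    have e1: "real (Suc (Suc n)) * th = x + th" by (simp add: algebra_simps x_def)
    have e2: "real n * th = x - th" by (simp add: algebra_simps x_def)
    have c: "cos (x + th) = 2 * C * cos x - cos (x - th)" by (simp add: cos_add cos_diff C_def)
    have s: "sin (x + th) = 2 * C * sin x - sin (x - th)" by (simp add: sin_add sin_diff C_def)
    show ?thesis unfolding w_def e1 e2 c s x_def[symmetric]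
      by (simp add: algebra_simps)
  qed
  have Kab': "K a b = - C" "K b a = - C" using Kab Kba by (simp_all add: C_def th_def)
  have main: "((sg K a \<circ> sg K b) ^^ k) f =
      (\<lambda>u. f u - 2 * (\<Sum>j<k. w (2*j+2)) * K a u - 2 * (\<Sum>j<k. w (2*j+1)) * K b u)
    \<and> ((sg K a \<circ> sg K b) ^^ k) f a = - w (2*k) \<and> ((sg K a \<circ> sg K b) ^^ k) f b = w (2*k+1)" for k
  proof (induction k)
    case 0 then show ?case using w0 w1 by (simp add: p_def q_def)
  next
    case (Suc k)
    define F where "F = ((sg K a \<circ> sg K b) ^^ k) f"
    have F: "F = (\<lambda>u. f u - 2 * (\<Sum>j<k. w (2*j+2)) * K a u - 2 * (\<Sum>j<k. w (2*j+1)) * K b u)"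
      "F a = - w (2*k)" "F b = w (2*k+1)" using Suc.IH unfolding F_def by blast+
    define G where "G = sg K b F"
    have Ga: "G a = w (2*k+2)" unfolding G_def sg_def using F Kab' wrec[of "2*k"] by simp
    have Gb: "G b = - w (2*k+1)" unfolding G_def sg_def using F Kbb by simp
    have eq: "((sg K a \<circ> sg K b) ^^ Suc k) f = sg K a G" by (simp add: G_def F_def)
    have r1: "sg K a G = (\<lambda>u. f u - 2 * (\<Sum>j<Suc k. w (2*j+2)) * K a u - 2 * (\<Sum>j<Suc k. w (2*j+1)) * K b u)"
    proof -
      have "sg K a G = (\<lambda>u. G u - 2 * K a u * w (2*k+2))" by (simp add: sg_def Ga)
      also have "\<dots> = (\<lambda>u. F u - 2 * K b u * w (2*k+1) - 2 * K a u * w (2*k+2))"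
        by (simp add: G_def sg_def F(3))
      finally show ?thesis unfolding F(1) by (simp add: algebra_simps)
    qed
    have r2: "sg K a G a = - w (2 * Suc k)" unfolding sg_def using Ga Kaa by simp
    have r3: "sg K a G b = w (2 * Suc k + 1)" unfolding sg_def using Ga Gb Kab' wrec[of "2*k+1"] by simp
    show ?case unfolding eq using r1 r2 r3 by blast
  qed
  have s1: "(\<Sum>j<m. w (2*j+1)) = 0"
  proof -
    have "(\<Sum>j<m. w (2*j+1)) = - p * (\<Sum>j<m. cos (th + real j * (2 * (pi / m)))) + B * (\<Sum>j<m. sin (th + real j * (2 * (pi / m))))"
    proof -
      have "w (2*j+1) = - p * cos (th + real j * (2 * (pi / m))) + B * sin (th + real j * (2 * (pi / m)))" for j
        unfolding w_def th_def by (simp add: algebra_simps)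
      then show ?thesis by (simp only: sum.distrib sum_distrib_left)
    qed
    then show ?thesis using sum_trig_zero[OF m] by simp
  qed
  have s2: "(\<Sum>j<m. w (2*j+2)) = 0"
  proof -
    have "(\<Sum>j<m. w (2*j+2)) = - p * (\<Sum>j<m. cos (2 * th + real j * (2 * (pi / m)))) + B * (\<Sum>j<m. sin (2 * th + real j * (2 * (pi / m))))"
    proof -
      have "w (2*j+2) = - p * cos (2 * th + real j * (2 * (pi / m))) + B * sin (2 * th + real j * (2 * (pi / m)))" for j
        unfolding w_def th_def by (simp add: algebra_simps)
      then show ?thesis by (simp only: sum.distrib sum_distrib_left)
    qed
    then show ?thesis using sum_trig_zero[OF m] by simp
  qed
  show ?thesis using main[of m] s1 s2 by simp
qed



definition cc :: "('a, 'b) monoid_scheme \<Rightarrow> 'a \<Rightarrow> 'a \<Rightarrow> real" where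
  "cc W s u = - cos (pi / real (cox_m W s u))"

definition sact :: "('a, 'b) monoid_scheme \<Rightarrow> 'a list \<Rightarrow> ('a \<Rightarrow> real) \<Rightarrow> ('a \<Rightarrow> real)" where
  "sact W w = foldr (\<lambda>s g. sg (cc W) s \<circ> g) w id"

lemma sact_Nil[simp]: "sact W [] = id" by (simp add: sact_def)
lemma sact_Cons[simp]: "sact W (s # w) = sg (cc W) s \<circ> sact W w" by (simp add: sact_def)
lemma sact_append: "sact W (u @ v) = sact W u \<circ> sact W v"
  by (induction u) auto

lemma sact_alt_word: "sact W (alt_word s t (2 * k)) = (sg (cc W) s \<circ> sg (cc W) t) ^^ k"
proof (induction k)
  case 0 then show ?case by (simp add: alt_word_def)
next
  case (Suc k)
  have "alt_word s t (2 * Suc k) = s # t # alt_word s t (2 * k)"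
    using alt_word_SucSuc by (metis mult_Suc_right add_2_eq_Suc)
  then show ?case using Suc by (simp add: funpow_Suc_right comp_assoc funpow_swap1)
qed

lemma sg_sq: "K s s = 1 \<Longrightarrow> sg K s (sg K s f) = f"
  by (simp add: sg_def algebra_simps)

lemma sg_fix: "f s = 0 \<Longrightarrow> sg K s f = f"
  by (simp add: sg_def)

lemma coxeter_group: "coxeter_system W S \<Longrightarrow> group W"
  by (simp add: coxeter_system_def)

lemma cox_m_self:
  assumes "coxeter_system W S" "s \<in> S"
  shows "cox_m W s s = 1"
  using assms unfolding coxeter_system_def cox_m_def by (simp add: group.ord_id)

lemma cc_self:
  assumes "coxeter_system W S" "s \<in> S"
  shows "cc W s s = 1"
  using cox_m_self[OF assms] by (simp add: cc_def)

lemma cox_m_sym: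
  assumes "coxeter_system W S" "s \<in> S" "t \<in> S"
  shows "cox_m W s t = cox_m W t s"
  using assms unfolding coxeter_system_def cox_m_def by (auto intro: group.ord_swap)

lemma cox_m_ne1:
  assumes "coxeter_system W S" "s \<in> S" "t \<in> S" "s \<noteq> t"
  shows "cox_m W s t \<noteq> 1"
proof
  assume "cox_m W s t = 1"
  interpret group W using assms coxeter_group by blast
  have sc: "s \<in> carrier W" "t \<in> carrier W" using assms unfolding coxeter_system_def by auto
  have "s \<otimes>\<^bsub>W\<^esub> t = \<one>\<^bsub>W\<^esub>" using \<open>cox_m W s t = 1\<close> sc ord_eq_1 unfolding cox_m_def by simp
  moreover have "s \<otimes>\<^bsub>W\<^esub> s = \<one>\<^bsub>W\<^esub>" using assms unfolding coxeter_system_def by auto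
  ultimately have "s \<otimes>\<^bsub>W\<^esub> t = s \<otimes>\<^bsub>W\<^esub> s" by simp
  then show False using sc assms(4) by (metis l_cancel)
qed

lemma sact_invariant:
  assumes cs: "coxeter_system W S"
  shows "cox_eq W S u v \<Longrightarrow> sact W u = sact W v"
proof (induction rule: cox_eq.induct)
  case (ctxt u v x y)
  then show ?case by (simp add: sact_append)
next
  case (sq s)
  then show ?case using cc_self[OF cs] by (auto simp: sg_sq)
next
  case (braid s t)
  show ?case
  proof (cases "s = t")
    case True
    then have "cox_m W s t = 1" using cox_m_self[OF cs] braid by simp
    then have "alt_word s t (2 * cox_m W s t) = [s, s]" using True by (simp add: alt_word_def numeral_2_eq_2)
    then show ?thesis using cc_self[OF cs] braid by (auto simp: sg_sq)
  next
    case False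
    define m where "m = cox_m W s t"
    have m0: "m \<noteq> 0" using braid by (simp add: m_def cox_finite_def)
    have m1: "m \<noteq> 1" using cox_m_ne1[OF cs braid(1,2) False] by (simp add: m_def)
    have m2: "m \<ge> 2" using m0 m1 by simp
    have "((sg (cc W) s \<circ> sg (cc W) t) ^^ m) f = f" for f
      by (rule dihedral_relation[OF m2])
        (use cc_self[OF cs] braid cox_m_sym[OF cs braid(1,2)] in \<open>auto simp: cc_def m_def\<close>)
    then show ?thesis by (simp add: sact_alt_word m_def[symmetric] fun_eq_iff)
  qed
qed auto

lemma parabolic_simple:
  assumes cs: "coxeter_system W S" and T: "T \<subseteq> S" and t: "t \<in> S" "t \<in> generate W T"
  shows "t \<in> T"
proof (rule ccontr)
  assume tT: "t \<notin> T"
  interpret group W using cs coxeter_group by blast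
  have Sc: "S \<subseteq> carrier W" and inv: "\<forall>s\<in>S. s \<otimes>\<^bsub>W\<^esub> s = \<one>\<^bsub>W\<^esub>"
    using cs unfolding coxeter_system_def by auto
  obtain w where w: "set w \<subseteq> T" "word_prod W w = t"
    using generate_word[of T t] T Sc inv t by blast
  have "word_prod W (t # w) = \<one>\<^bsub>W\<^esub>" using w inv t by simp
  moreover have "set (t # w) \<subseteq> S" using w T t by auto
  ultimately have "cox_eq W S (t # w) []" using cs unfolding coxeter_system_def by blast
  then have eq: "sact W (t # w) = id" using sact_invariant[OF cs] by fastforce
  define f where "f = (\<lambda>u. if u = t then 1 else (0::real))"
  have "set w' \<subseteq> T \<Longrightarrow> sact W w' f = f" for w'
  proof (induction w')
    case (Cons s w')
    then have "s \<noteq> t" using tT by auto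
    then show ?case using Cons by (simp add: sg_fix f_def)
  qed simp
  then have "sact W (t # w) f = sg (cc W) t f" using w by simp
  moreover have "sact W (t # w) f = f" using eq by (metis id_apply)
  ultimately have "sg (cc W) t f t = f t" by simp
  then show False using cc_self[OF cs t(1)] by (simp add: sg_def f_def)
qed



definition rep :: "('a, 'b) monoid_scheme \<Rightarrow> 'a set \<Rightarrow> 'a \<Rightarrow> 'a" where
  "rep G A h = (if h \<in> A then \<one>\<^bsub>G\<^esub> else (SOME r. \<exists>a\<in>A. r = a \<otimes>\<^bsub>G\<^esub> h))"

fun altl :: "(bool \<times> 'a) list \<Rightarrow> bool" where
  "altl (x # y # rs) = (fst x \<noteq> fst y \<and> altl (y # rs))"
| "altl _ = True"

definition lettersok :: "('a, 'b) monoid_scheme \<Rightarrow> 'a set \<Rightarrow> (bool \<times> 'a) list \<Rightarrow> bool" where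
  "lettersok G A rs = (\<forall>x \<in> set rs. snd x \<in> carrier G \<and> snd x \<notin> A \<and> rep G A (snd x) = snd x)"

definition valid :: "('a, 'b) monoid_scheme \<Rightarrow> 'a set \<Rightarrow> 'a \<times> (bool \<times> 'a) list \<Rightarrow> bool" where
  "valid G A \<omega> = (fst \<omega> \<in> A \<and> lettersok G A (snd \<omega>) \<and> altl (snd \<omega>))"

definition nb :: "bool \<Rightarrow> (bool \<times> 'a) list \<Rightarrow> bool" where
  "nb b rs = (case rs of [] \<Rightarrow> True | x # _ \<Rightarrow> fst x \<noteq> b)"

definition psi :: "('a, 'b) monoid_scheme \<Rightarrow> bool \<Rightarrow> 'a \<times> (bool \<times> 'a) list \<Rightarrow> 'a \<times> (bool \<times> 'a) list" where
  "psi G b \<omega> = (case snd \<omega> of x # rs' \<Rightarrow> if fst x = b then (fst \<omega> \<otimes>\<^bsub>G\<^esub> snd x, rs') else \<omega> | [] \<Rightarrow> \<omega>)"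

definition phi :: "('a, 'b) monoid_scheme \<Rightarrow> 'a set \<Rightarrow> bool \<Rightarrow> 'a \<Rightarrow> (bool \<times> 'a) list \<Rightarrow> 'a \<times> (bool \<times> 'a) list" where
  "phi G A b h rest = (h \<otimes>\<^bsub>G\<^esub> inv\<^bsub>G\<^esub> (rep G A h),
      if rep G A h = \<one>\<^bsub>G\<^esub> then rest else (b, rep G A h) # rest)"

definition act :: "('a, 'b) monoid_scheme \<Rightarrow> 'a set \<Rightarrow> bool \<Rightarrow> 'a \<Rightarrow> 'a \<times> (bool \<times> 'a) list \<Rightarrow> 'a \<times> (bool \<times> 'a) list" where
  "act G A b g \<omega> = phi G A b (g \<otimes>\<^bsub>G\<^esub> fst (psi G b \<omega>)) (snd (psi G b \<omega>))"

locale amal = group + fixes A assumes sub: "subgroup A G"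
begin

lemma A_carrier: "A \<subseteq> carrier G" by (rule subgroup.subset[OF sub])
lemma A_one: "\<one> \<in> A" by (rule subgroup.one_closed[OF sub])
lemma A_mult: "a \<in> A \<Longrightarrow> b \<in> A \<Longrightarrow> a \<otimes> b \<in> A" by (rule subgroup.m_closed[OF sub])
lemma A_inv: "a \<in> A \<Longrightarrow> inv a \<in> A" by (rule subgroup.m_inv_closed[OF sub])

lemma A_mult_iff: assumes "a \<in> A" "h \<in> carrier G" shows "a \<otimes> h \<in> A \<longleftrightarrow> h \<in> A"
proof
  assume "a \<otimes> h \<in> A"
  then have "inv a \<otimes> (a \<otimes> h) \<in> A" using A_mult A_inv assms by blast
  moreover have "inv a \<otimes> (a \<otimes> h) = h" using assms A_carrier inv_cancel_left by blast
  ultimately show "h \<in> A" by simp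
next
  assume "h \<in> A"
  then show "a \<otimes> h \<in> A" using assms A_mult by blast
qed

lemma rep_coset: assumes "h \<in> carrier G" shows "\<exists>a\<in>A. rep G A h = a \<otimes> h"
proof (cases "h \<in> A")
  case True
  then show ?thesis using assms A_inv by (intro bexI[of _ "inv h"]) (auto simp: rep_def)
next
  case False
  have "\<exists>r. \<exists>a\<in>A. r = a \<otimes> h" using A_one assms by auto
  then show ?thesis using False someI_ex[of "\<lambda>r. \<exists>a\<in>A. r = a \<otimes> h"] unfolding rep_def by simp
qed

lemma rep_carrier: assumes "h \<in> carrier G" shows "rep G A h \<in> carrier G"
proof -
  obtain a where a: "a \<in> A" "rep G A h = a \<otimes> h" using rep_coset[OF assms] by blast
  have "a \<in> carrier G" using a(1) A_carrier by blast
  then show ?thesis using a(2) assms by simp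
qed

lemma rep_A: "h \<in> A \<Longrightarrow> rep G A h = \<one>" by (simp add: rep_def)

lemma rep_notA: assumes "h \<in> carrier G" "h \<notin> A" shows "rep G A h \<notin> A"
proof -
  obtain a where a: "a \<in> A" "rep G A h = a \<otimes> h" using rep_coset[OF assms(1)] by blast
  then show ?thesis using A_mult_iff[OF a(1) assms(1)] assms(2) by simp
qed

lemma rep_one_iff: assumes "h \<in> carrier G" shows "rep G A h = \<one> \<longleftrightarrow> h \<in> A"
proof
  assume "rep G A h = \<one>"
  show "h \<in> A"
  proof (rule ccontr)
    assume "h \<notin> A"
    then have "rep G A h \<notin> A" by (rule rep_notA[OF assms])
    then show False using A_one \<open>rep G A h = \<one>\<close> by simp
  qed
qed (rule rep_A)

lemma rep_left: assumes "a \<in> A" "h \<in> carrier G" shows "rep G A (a \<otimes> h) = rep G A h"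
proof (cases "h \<in> A")
  case True
  then show ?thesis using assms A_mult by (simp add: rep_A)
next
  case False
  then have nA: "a \<otimes> h \<notin> A" using A_mult_iff assms by blast
  have ac: "a \<in> carrier G" using assms A_carrier by blast
  have "(\<lambda>r. \<exists>a'\<in>A. r = a' \<otimes> (a \<otimes> h)) = (\<lambda>r. \<exists>a'\<in>A. r = a' \<otimes> h)"
  proof (intro ext iffI)
    fix r assume "\<exists>a'\<in>A. r = a' \<otimes> (a \<otimes> h)"
    then obtain a' where a': "a' \<in> A" "r = a' \<otimes> (a \<otimes> h)" by blast
    have a'c: "a' \<in> carrier G" using a'(1) A_carrier by blast
    have "r = (a' \<otimes> a) \<otimes> h" using a'(2) a'c ac assms(2) by (simp add: m_assoc)
    moreover have "a' \<otimes> a \<in> A" using A_mult a'(1) assms(1) by blast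
    ultimately show "\<exists>a'\<in>A. r = a' \<otimes> h" by blast
  next
    fix r assume "\<exists>a'\<in>A. r = a' \<otimes> h"
    then obtain a' where a': "a' \<in> A" "r = a' \<otimes> h" by blast
    have a'c: "a' \<in> carrier G" using a'(1) A_carrier by blast
    have "a' \<otimes> inv a \<otimes> (a \<otimes> h) = a' \<otimes> h" using a'c ac assms(2)
      by (simp add: m_assoc inv_cancel_left)
    moreover have "a' \<otimes> inv a \<in> A" using A_mult A_inv assms(1) a'(1) by blast
    ultimately show "\<exists>a''\<in>A. r = a'' \<otimes> (a \<otimes> h)" using a'(2) by (intro bexI[of _ "a' \<otimes> inv a"]) simp_all
  qed
  then have "(SOME r. \<exists>a'\<in>A. r = a' \<otimes> (a \<otimes> h)) = (SOME r. \<exists>a'\<in>A. r = a' \<otimes> h)"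
    by (rule arg_cong[where f=Eps])
  then show ?thesis unfolding rep_def if_not_P[OF nA] if_not_P[OF False] .
qed

lemma rep_rep: assumes "h \<in> carrier G" shows "rep G A (rep G A h) = rep G A h"
proof -
  obtain a where a: "a \<in> A" "rep G A h = a \<otimes> h" using rep_coset[OF assms] by blast
  then have "rep G A (rep G A h) = rep G A (a \<otimes> h)" by simp
  also have "\<dots> = rep G A h" using rep_left a assms by blast
  finally show ?thesis .
qed

lemma rep_quot: assumes "h \<in> carrier G" shows "h \<otimes> inv (rep G A h) \<in> A"
proof -
  obtain a where a: "a \<in> A" "rep G A h = a \<otimes> h" using rep_coset assms by blast
  have ac: "a \<in> carrier G" using a A_carrier by auto
  have "h \<otimes> inv (a \<otimes> h) = inv a" using ac assms
    by (simp add: inv_mult_group m_assoc[symmetric])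
  then show ?thesis using a A_inv by simp
qed

lemma psi_props:
  assumes "valid G A \<omega>"
  shows "fst (psi G b \<omega>) \<in> carrier G" "lettersok G A (snd (psi G b \<omega>))"
    "altl (snd (psi G b \<omega>))" "nb b (snd (psi G b \<omega>))"
proof -
  obtain a rs where w: "\<omega> = (a, rs)" by (cases \<omega>)
  have a: "a \<in> carrier G" "lettersok G A rs" "altl rs" using assms A_carrier by (auto simp: valid_def w)
  have "fst (psi G b \<omega>) \<in> carrier G \<and> lettersok G A (snd (psi G b \<omega>)) \<and>
    altl (snd (psi G b \<omega>)) \<and> nb b (snd (psi G b \<omega>))"
  proof (cases rs)
    case Nil then show ?thesis using a by (simp add: w psi_def nb_def lettersok_def)
  next
    case (Cons x rs')
    show ?thesis
    proof (cases "fst x = b")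
      case True
      have "altl rs'" using a Cons by (cases rs' rule: altl.cases) auto
      moreover have "nb b rs'" using a Cons True by (cases rs') (auto simp: nb_def)
      ultimately show ?thesis using a Cons True by (auto simp: w psi_def lettersok_def)
    next
      case False
      then show ?thesis using a Cons by (auto simp: w psi_def nb_def)
    qed
  qed
  then show "fst (psi G b \<omega>) \<in> carrier G" "lettersok G A (snd (psi G b \<omega>))"
    "altl (snd (psi G b \<omega>))" "nb b (snd (psi G b \<omega>))" by auto
qed

lemma phi_valid:
  assumes "h \<in> carrier G" "lettersok G A rest" "altl rest" "nb b rest"
  shows "valid G A (phi G A b h rest)"
proof -
  have "altl ((b, rep G A h) # rest)" using assms(3,4) by (cases rest) (auto simp: nb_def)
  moreover have "rep G A h \<noteq> \<one> \<Longrightarrow> lettersok G A ((b, rep G A h) # rest)"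
    using assms rep_carrier rep_notA rep_rep rep_one_iff by (auto simp: lettersok_def)
  ultimately show ?thesis using assms rep_quot by (auto simp: valid_def phi_def)
qed

lemma psi_phi:
  assumes "h \<in> carrier G" "nb b rest"
  shows "psi G b (phi G A b h rest) = (h, rest)"
proof (cases "rep G A h = \<one>")
  case True
  then show ?thesis using assms by (cases rest) (auto simp: psi_def phi_def nb_def)
next
  case False
  then show ?thesis using assms rep_carrier by (simp add: psi_def phi_def m_assoc)
qed

lemma phi_psi:
  assumes "valid G A \<omega>"
  shows "phi G A b (fst (psi G b \<omega>)) (snd (psi G b \<omega>)) = \<omega>"
proof -
  obtain a rs where w: "\<omega> = (a, rs)" by (cases \<omega>)
  have a: "a \<in> A" "lettersok G A rs" "altl rs" using assms by (auto simp: valid_def w)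
  have ac: "a \<in> carrier G" using a A_carrier by auto
  show ?thesis
  proof (cases rs)
    case Nil then show ?thesis using a ac by (simp add: w psi_def phi_def rep_A)
  next
    case (Cons x rs')
    obtain c r where x: "x = (c, r)" by (cases x)
    have r: "r \<in> carrier G" "r \<notin> A" "rep G A r = r" using a Cons x by (auto simp: lettersok_def)
    show ?thesis
    proof (cases "c = b")
      case True
      have "rep G A (a \<otimes> r) = r" using rep_left a r ac by simp
      moreover have "r \<noteq> \<one>" using r A_one by auto
      ultimately show ?thesis using True Cons x ac r by (simp add: w psi_def phi_def m_assoc)
    next
      case False
      then show ?thesis using Cons x a ac by (simp add: w psi_def phi_def rep_A)
    qed
  qed
qed

lemma act_valid: "g \<in> carrier G \<Longrightarrow> valid G A \<omega> \<Longrightarrow> valid G A (act G A b g \<omega>)"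
  unfolding act_def using psi_props phi_valid by simp

lemma act_mult:
  assumes "g \<in> carrier G" "g' \<in> carrier G" "valid G A \<omega>"
  shows "act G A b g (act G A b g' \<omega>) = act G A b (g \<otimes> g') \<omega>"
proof -
  have "psi G b (act G A b g' \<omega>) = (g' \<otimes> fst (psi G b \<omega>), snd (psi G b \<omega>))"
    unfolding act_def using psi_phi psi_props assms by simp
  then show ?thesis unfolding act_def using assms psi_props by (simp add: m_assoc)
qed

lemma act_one: "valid G A \<omega> \<Longrightarrow> act G A b \<one> \<omega> = \<omega>"
  unfolding act_def using psi_props phi_psi by simp

lemma act_A:
  assumes "g \<in> A" "valid G A \<omega>"
  shows "act G A b g \<omega> = (g \<otimes> fst \<omega>, snd \<omega>)"
proof -
  obtain a rs where w: "\<omega> = (a, rs)" by (cases \<omega>)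
  have a: "a \<in> A" "lettersok G A rs" "altl rs" using assms by (auto simp: valid_def w)
  have ac: "a \<in> carrier G" "g \<in> carrier G" using a assms A_carrier by auto
  have ga: "g \<otimes> a \<in> A" using a assms A_mult by auto
  show ?thesis
  proof (cases rs)
    case Nil then show ?thesis using ga ac by (simp add: w act_def psi_def phi_def rep_A)
  next
    case (Cons x rs')
    obtain c r where x: "x = (c, r)" by (cases x)
    have r: "r \<in> carrier G" "r \<notin> A" "rep G A r = r" using a Cons x by (auto simp: lettersok_def)
    show ?thesis
    proof (cases "c = b")
      case True
      have "rep G A (g \<otimes> (a \<otimes> r)) = r" using rep_left ga r ac by (simp add: m_assoc[symmetric])
      moreover have "r \<noteq> \<one>" using r A_one by auto
      ultimately show ?thesis using True Cons x ac r by (simp add: w act_def psi_def phi_def m_assoc)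
    next
      case False
      then show ?thesis using Cons x ga ac by (simp add: w act_def psi_def phi_def rep_A)
    qed
  qed
qed

lemma act_grow:
  assumes "g \<in> carrier G" "g \<notin> A" "valid G A \<omega>" "nb b (snd \<omega>)"
  shows "snd (act G A b g \<omega>) = (b, rep G A (g \<otimes> fst \<omega>)) # snd \<omega>"
proof -
  have ps: "psi G b \<omega> = \<omega>" using assms(4) by (cases "snd \<omega>") (auto simp: psi_def nb_def split: list.splits)
  have ac: "fst \<omega> \<in> A" "fst \<omega> \<in> carrier G" using assms(3) A_carrier by (auto simp: valid_def)
  have "g \<otimes> fst \<omega> \<notin> A"
  proof
    assume "g \<otimes> fst \<omega> \<in> A"
    then have "g \<otimes> fst \<omega> \<otimes> inv (fst \<omega>) \<in> A" using A_mult A_inv ac by blast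
    then show False using assms ac by (simp add: m_assoc)
  qed
  then have "rep G A (g \<otimes> fst \<omega>) \<noteq> \<one>" using rep_one_iff assms ac by simp
  then show ?thesis using ps by (simp add: act_def phi_def)
qed

end



definition Lw :: "('a, 'b) monoid_scheme \<Rightarrow> 'a set \<Rightarrow> 'a set \<Rightarrow> 'a \<Rightarrow> 'a \<times> (bool \<times> 'a) list \<Rightarrow> 'a \<times> (bool \<times> 'a) list" where
  "Lw G A S1 s = (if s \<in> carrier G then (if s \<in> S1 then act G A True s else act G A False s) else id)"

definition wact :: "('a, 'b) monoid_scheme \<Rightarrow> 'a set \<Rightarrow> 'a set \<Rightarrow> 'a list \<Rightarrow> 'a \<times> (bool \<times> 'a) list \<Rightarrow> 'a \<times> (bool \<times> 'a) list" where
  "wact G A S1 w = foldr (\<lambda>s f. Lw G A S1 s \<circ> f) w id"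

lemma wact_Nil[simp]: "wact G A S1 [] = id" by (simp add: wact_def)
lemma wact_Cons[simp]: "wact G A S1 (s # w) = Lw G A S1 s \<circ> wact G A S1 w" by (simp add: wact_def)
lemma wact_append: "wact G A S1 (u @ v) = wact G A S1 u \<circ> wact G A S1 v"
  by (induction u) auto
lemma wact_concat_replicate: "wact G A S1 (concat (replicate n w)) = (wact G A S1 w) ^^ n"
  by (induction n) (auto simp: wact_append)

lemma set_alt_word: "set (alt_word s t n) \<subseteq> {s, t}"
  by (auto simp: alt_word_def)

context amal begin

lemma Lw_valid: "valid G A \<omega> \<Longrightarrow> valid G A (Lw G A S1 s \<omega>)"
  by (auto simp: Lw_def act_valid)

lemma wact_valid: "valid G A \<omega> \<Longrightarrow> valid G A (wact G A S1 w \<omega>)"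
  by (induction w) (auto simp: Lw_valid)

lemma wact_S1:
  assumes "S1 \<subseteq> carrier G" "set w \<subseteq> S1" "valid G A \<omega>"
  shows "wact G A S1 w \<omega> = act G A True (word_prod G w) \<omega>"
  using assms(2)
proof (induction w)
  case Nil then show ?case using assms(3) by (simp add: act_one)
next
  case (Cons s w)
  have sc: "s \<in> carrier G" "set w \<subseteq> carrier G" using Cons.prems assms(1) by auto
  have "wact G A S1 (s # w) \<omega> = act G A True s (act G A True (word_prod G w) \<omega>)"
    using Cons sc by (simp add: Lw_def)
  also have "\<dots> = act G A True (s \<otimes> word_prod G w) \<omega>"
    using act_mult sc word_prod_closed assms(3) by blast
  finally show ?case by simp
qed

lemma wact_S2:
  assumes "S2 \<subseteq> carrier G" "S1 \<inter> S2 \<subseteq> A" "set w \<subseteq> S2" "valid G A \<omega>"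
  shows "wact G A S1 w \<omega> = act G A False (word_prod G w) \<omega>"
  using assms(3)
proof (induction w)
  case Nil then show ?case using assms(4) by (simp add: act_one)
next
  case (Cons s w)
  have sc: "s \<in> carrier G" "set w \<subseteq> carrier G" "s \<in> S2" using Cons.prems assms(1) by auto
  define \<omega>' where "\<omega>' = act G A False (word_prod G w) \<omega>"
  have v': "valid G A \<omega>'" unfolding \<omega>'_def using act_valid word_prod_closed sc assms(4) by blast
  have "Lw G A S1 s \<omega>' = act G A False s \<omega>'"
  proof (cases "s \<in> S1")
    case True
    then have "s \<in> A" using sc assms(2) by blast
    then show ?thesis using True act_A v' sc by (simp add: Lw_def)
  next
    case False
    then show ?thesis using sc by (simp add: Lw_def)
  qed
  then have "wact G A S1 (s # w) \<omega> = act G A False s (act G A False (word_prod G w) \<omega>)"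
    using Cons by (simp add: \<omega>'_def)
  also have "\<dots> = act G A False (s \<otimes> word_prod G w) \<omega>"
    using act_mult sc word_prod_closed assms(4) by blast
  finally show ?case by simp
qed

lemma wact_invariant:
  assumes cs: "coxeter_system G S" and SU: "S = S1 \<union> S2" and S0A: "S1 \<inter> S2 \<subseteq> A"
    and cross: "\<forall>s\<in>S1-S2. \<forall>t\<in>S2-S1. \<not> cox_finite G s t \<and> \<not> cox_finite G t s"
  shows "cox_eq G S u v \<Longrightarrow> valid G A \<omega> \<Longrightarrow> wact G A S1 u \<omega> = wact G A S1 v \<omega>"
proof (induction arbitrary: \<omega> rule: cox_eq.induct)
  case (refl w) then show ?case by simp
next
  case (sym u v) then show ?case by simp
next
  case (trans u v w) then show ?case by simp
next
  case (ctxt u v x y)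
  have "valid G A (wact G A S1 y \<omega>)" using ctxt.prems wact_valid by blast
  then show ?case using ctxt by (simp add: wact_append)
next
  have Sc: "S \<subseteq> carrier G" and inv: "\<forall>s\<in>S. s \<otimes> s = \<one>"
    using cs unfolding coxeter_system_def by auto
  have S1c: "S1 \<subseteq> carrier G" and S2c: "S2 \<subseteq> carrier G" using Sc SU by auto
  have key: "wact G A S1 w \<omega> = \<omega>" if "valid G A \<omega>" "word_prod G w = \<one>" "set w \<subseteq> S1 \<or> set w \<subseteq> S2" for w \<omega>
  proof -
    from that(3) show ?thesis
    proof
      assume "set w \<subseteq> S1"
      then have "wact G A S1 w \<omega> = act G A True (word_prod G w) \<omega>" using wact_S1[OF S1c] that(1) by blast
      then show ?thesis using that(1,2) act_one by simp
    next
      assume "set w \<subseteq> S2"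
      then have "wact G A S1 w \<omega> = act G A False (word_prod G w) \<omega>" using wact_S2[OF S2c S0A] that(1) by blast
      then show ?thesis using that(1,2) act_one by simp
    qed
  qed
  {
    case (sq s)
    then have ss: "set [s, s] \<subseteq> S1 \<or> set [s, s] \<subseteq> S2" using SU by auto
    have wp: "word_prod G [s, s] = \<one>" using sq inv Sc by auto
    have "wact G A S1 [s, s] \<omega> = \<omega>" by (rule key[OF sq.prems wp ss])
    then show ?case by simp
  next
    case (braid s t)
    define m where "m = cox_m G s t"
    have sc: "s \<in> carrier G" "t \<in> carrier G" using braid Sc by auto
    have "word_prod G (alt_word s t (2 * m)) = (s \<otimes> t) [^] m"
      using word_prod_alt_word sc by blast
    also have "\<dots> = \<one>" using sc by (simp add: m_def cox_m_def)
    finally have wp: "word_prod G (alt_word s t (2 * m)) = \<one>" .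
    have "(s \<in> S1 \<and> t \<in> S1) \<or> (s \<in> S2 \<and> t \<in> S2)"
    proof (rule ccontr)
      assume nn: "\<not> ((s \<in> S1 \<and> t \<in> S1) \<or> (s \<in> S2 \<and> t \<in> S2))"
      have sS: "s \<in> S1 \<or> s \<in> S2" "t \<in> S1 \<or> t \<in> S2" using braid(1,2) SU by auto
      show False
      proof (cases "s \<in> S1")
        case True
        then have "s \<in> S1 - S2" "t \<in> S2 - S1" using nn sS by auto
        then show False using cross braid(3) by blast
      next
        case False
        then have "t \<in> S1 - S2" "s \<in> S2 - S1" using nn sS by auto
        then show False using cross braid(3) by blast
      qed
    qed
    then have "set (alt_word s t (2 * m)) \<subseteq> S1 \<or> set (alt_word s t (2 * m)) \<subseteq> S2"
      using set_alt_word[of s t "2 * m"] by blast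
    then show ?case using key wp braid by (simp add: m_def)
  }
qed

lemma infinite_order:
  assumes cs: "coxeter_system G S" and SU: "S = S1 \<union> S2" and S0A: "S1 \<inter> S2 \<subseteq> A"
    and cross: "\<forall>s\<in>S1-S2. \<forall>t\<in>S2-S1. \<not> cox_finite G s t \<and> \<not> cox_finite G t s"
    and x: "x \<in> S1" "x \<notin> A" and y: "y \<in> generate G S2" "y \<notin> A"
  shows "ord (x \<otimes> y) = 0"
proof (rule ccontr)
  assume n0: "ord (x \<otimes> y) \<noteq> 0"
  define n where "n = ord (x \<otimes> y)"
  have Sc: "S \<subseteq> carrier G" and inv: "\<forall>s\<in>S. s \<otimes> s = \<one>"
    using cs unfolding coxeter_system_def by auto
  have S1c: "S1 \<subseteq> carrier G" and S2c: "S2 \<subseteq> carrier G" using Sc SU by auto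
  obtain wy where wy: "set wy \<subseteq> S2" "word_prod G wy = y"
    using generate_word[OF S2c _ y(1)] inv SU by blast
  have xc: "x \<in> carrier G" using x S1c by auto
  have yc: "y \<in> carrier G" using wy S2c word_prod_closed by auto
  define u where "u = concat (replicate n (x # wy))"
  have uS: "set u \<subseteq> S" using wy x SU by (auto simp: u_def)
  have "word_prod G u = word_prod G (x # wy) [^] n"
  proof -
    have "set (x # wy) \<subseteq> carrier G" using wy(1) x(1) S1c S2c by auto
    then show ?thesis unfolding u_def by (rule word_prod_concat_replicate)
  qed
  also have "\<dots> = \<one>" using wy xc yc by (simp add: n_def)
  finally have "cox_eq G S u []" using uS cs unfolding coxeter_system_def by blast
  define \<omega>0 :: "'a \<times> (bool \<times> 'a) list" where "\<omega>0 = (\<one>, [])"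
  have v0: "valid G A \<omega>0" by (simp add: \<omega>0_def valid_def A_one lettersok_def)
  have fix0: "wact G A S1 u \<omega>0 = \<omega>0"
    using wact_invariant[OF cs SU S0A cross \<open>cox_eq G S u []\<close> v0] by simp
  define F where "F = wact G A S1 (x # wy)"
  have step: "F \<omega> = act G A True x (act G A False y \<omega>)" if "valid G A \<omega>" for \<omega>
    using wact_S2[OF S2c S0A wy(1) that] wy x xc by (simp add: F_def Lw_def)
  have inv_k: "valid G A ((F ^^ k) \<omega>0) \<and> length (snd ((F ^^ k) \<omega>0)) = 2 * k \<and> nb False (snd ((F ^^ k) \<omega>0))" for k
  proof (induction k)
    case 0 then show ?case using v0 by (simp add: \<omega>0_def nb_def)
  next
    case (Suc k)
    define \<omega> where "\<omega> = (F ^^ k) \<omega>0"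
    have v: "valid G A \<omega>" "length (snd \<omega>) = 2 * k" "nb False (snd \<omega>)" using Suc by (simp_all add: \<omega>_def)
    define \<omega>1 where "\<omega>1 = act G A False y \<omega>"
    have v1: "valid G A \<omega>1" using act_valid yc v \<omega>1_def by blast
    have s1: "snd \<omega>1 = (False, rep G A (y \<otimes> fst \<omega>)) # snd \<omega>" using act_grow[OF yc y(2) v(1) v(3)] \<omega>1_def by simp
    define \<omega>2 where "\<omega>2 = act G A True x \<omega>1"
    have v2: "valid G A \<omega>2" using act_valid xc v1 \<omega>2_def by blast
    have nb1: "nb True (snd \<omega>1)" using s1 by (simp add: nb_def)
    have s2: "snd \<omega>2 = (True, rep G A (x \<otimes> fst \<omega>1)) # snd \<omega>1" using act_grow[OF xc x(2) v1 nb1] \<omega>2_def by simp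
    have "(F ^^ Suc k) \<omega>0 = \<omega>2" using step v(1) by (simp add: \<omega>_def \<omega>1_def \<omega>2_def)
    then show ?case using v2 s1 s2 v by (simp add: nb_def)
  qed
  have "wact G A S1 u \<omega>0 = (F ^^ n) \<omega>0" by (simp add: u_def F_def wact_concat_replicate)
  then have "length (snd \<omega>0) = 2 * n" using inv_k[of n] fix0 by simp
  then show False using n0 by (simp add: \<omega>0_def n_def)
qed

end



lemma walk:
  fixes P Q :: "nat \<Rightarrow> bool"
  assumes no: "\<forall>k. \<not> (P k \<and> Q (Suc k))" and disj: "\<forall>k. \<not> (P k \<and> Q k)"
    and "P i" and "Q (i + e)"
  shows "\<exists>a. 0 < a \<and> a < e \<and> \<not> P (i + a) \<and> \<not> Q (i + a)"
  using assms(4)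
proof (induction e)
  case 0 then show ?case using disj \<open>P i\<close> by auto
next
  case (Suc e)
  show ?case
  proof (cases "P (i + e)")
    case True
    then show ?thesis using no Suc.prems by auto
  next
    case False
    show ?thesis
    proof (cases "Q (i + e)")
      case True
      then obtain a where "0 < a \<and> a < e \<and> \<not> P (i + a) \<and> \<not> Q (i + a)" using Suc.IH by blast
      then show ?thesis by (intro exI[of _ a]) auto
    next
      case nQ: False
      have "e \<noteq> 0" using False \<open>P i\<close> by (cases e) auto
      then show ?thesis using False nQ by (intro exI[of _ e]) auto
    qed
  qed
qed

lemma mod_facts:
  fixes x y n :: nat
  assumes "x < y" "x + 2 \<le> y" "y + 2 \<le> x + n"
  shows "x mod n \<noteq> y mod n" "y mod n \<noteq> (x mod n + 1) mod n" "x mod n \<noteq> (y mod n + 1) mod n"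
proof -
  have n: "n > 0" using assms by linarith
  show "x mod n \<noteq> y mod n"
  proof
    assume "x mod n = y mod n"
    then have "y mod n = x mod n" by simp
    then have "n dvd y - x" using assms mod_eq_dvd_iff_nat[of x y n] by simp
    then have "n \<le> y - x" using assms by (intro dvd_imp_le) auto
    then show False using assms by linarith
  qed
  show "y mod n \<noteq> (x mod n + 1) mod n"
  proof
    assume "y mod n = (x mod n + 1) mod n"
    then have "y mod n = (x + 1) mod n" by (simp add: mod_Suc_eq)
    then have "n dvd y - (x + 1)" using assms by (simp add: mod_eq_dvd_iff_nat)
    then have "n \<le> y - (x + 1)" using assms by (intro dvd_imp_le) auto
    then show False using assms by linarith
  qed
  show "x mod n \<noteq> (y mod n + 1) mod n"
  proof
    assume "x mod n = (y mod n + 1) mod n"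
    then have "(y + 1) mod n = x mod n" by (simp add: mod_Suc_eq)
    then have "n dvd (y + 1) - x" using assms by (simp add: mod_eq_dvd_iff_nat)
    then have "n \<le> (y + 1) - x" using assms by (intro dvd_imp_le) auto
    then show False using assms by linarith
  qed
qed

lemma cycle_chord:
  fixes vs :: "'a list" and L R :: "'a \<Rightarrow> bool" and E :: "'a \<Rightarrow> 'a \<Rightarrow> bool"
  assumes n4: "length vs \<ge> 4"
    and adj: "\<forall>i<length vs. E (vs ! i) (vs ! ((i + 1) mod length vs))"
    and noLR: "\<forall>u v. L u \<and> R v \<longrightarrow> \<not> E u v \<and> \<not> E v u"
    and disj: "\<forall>u. \<not> (L u \<and> R u)"
    and Li: "i < length vs" "L (vs ! i)" and Rj: "j < length vs" "R (vs ! j)"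
  shows "\<exists>p q. p < length vs \<and> q < length vs \<and> p \<noteq> q \<and> q \<noteq> (p + 1) mod length vs \<and>
     p \<noteq> (q + 1) mod length vs \<and> \<not> L (vs ! p) \<and> \<not> R (vs ! p) \<and> \<not> L (vs ! q) \<and> \<not> R (vs ! q)"
proof -
  define n where "n = length vs"
  have n0: "n > 0" using n4 unfolding n_def by linarith
  define Pk where "Pk k = L (vs ! (k mod n))" for k
  define Qk where "Qk k = R (vs ! (k mod n))" for k
  have adjk: "E (vs ! (k mod n)) (vs ! (Suc k mod n))" for k
  proof -
    have "k mod n < n" using n0 by simp
    then have "E (vs ! (k mod n)) (vs ! ((k mod n + 1) mod n))" using adj by (simp add: n_def)
    then show ?thesis by (simp add: mod_Suc_eq)
  qed
  have no1: "\<forall>k. \<not> (Pk k \<and> Qk (Suc k))" using adjk noLR by (auto simp: Pk_def Qk_def)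
  have no2: "\<forall>k. \<not> (Qk k \<and> Pk (Suc k))" using adjk noLR by (auto simp: Pk_def Qk_def)
  have d1: "\<forall>k. \<not> (Pk k \<and> Qk k)" using disj by (simp add: Pk_def Qk_def)
  have d2: "\<forall>k. \<not> (Qk k \<and> Pk k)" using disj by (auto simp: Pk_def Qk_def)
  have ij: "i \<noteq> j" using Li Rj disj by auto
  define j' where "j' = (if i < j then j else j + n)"
  have j'1: "i < j'" "j' < i + n" using ij Li Rj by (auto simp: j'_def n_def)
  have j'm: "j' mod n = j" using Rj by (auto simp: j'_def n_def)
  have Pi: "Pk i" using Li by (simp add: Pk_def n_def)
  have Qj: "Qk (i + (j' - i))" using Rj j'1 j'm by (simp add: Qk_def)
  obtain a where a: "0 < a" "a < j' - i" "\<not> Pk (i + a)" "\<not> Qk (i + a)"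
    using walk[OF no1 d1 Pi Qj] by blast
  have Qj': "Qk j'" using Rj j'm by (simp add: Qk_def)
  have Pi': "Pk (j' + (i + n - j'))" using Li j'1 by (simp add: Pk_def n_def)
  obtain b where b: "0 < b" "b < i + n - j'" "\<not> Qk (j' + b)" "\<not> Pk (j' + b)"
    using walk[OF no2 d2 Qj' Pi'] by blast
  define x where "x = i + a"
  define y where "y = j' + b"
  have xy: "x < y" "x + 2 \<le> y" "y + 2 \<le> x + n" using a b j'1 by (auto simp: x_def y_def)
  show ?thesis
    apply (rule exI[of _ "x mod n"], rule exI[of _ "y mod n"])
    using mod_facts[OF xy] n0 a b by (simp add: n_def[symmetric] Pk_def Qk_def x_def y_def)
qed



context group begin

lemma inv_cancel_left2: "g \<in> carrier G \<Longrightarrow> y \<in> carrier G \<Longrightarrow> g \<otimes> (inv g \<otimes> y) = y"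
  by (simp add: m_assoc[symmetric])

lemma conj_adj:
  assumes "g \<in> carrier G" "u \<in> carrier G" "v \<in> carrier G"
  shows "cox_adj G (g \<otimes> u \<otimes> inv g) (g \<otimes> v \<otimes> inv g) = cox_adj G u v"
proof -
  have e: "g \<otimes> u \<otimes> inv g \<otimes> (g \<otimes> v \<otimes> inv g) = g \<otimes> (u \<otimes> v) \<otimes> inv g"
    using assms by (simp add: m_assoc inv_cancel_left)
  have o: "cox_m G (g \<otimes> u \<otimes> inv g) (g \<otimes> v \<otimes> inv g) = cox_m G u v"
    unfolding cox_m_def e using assms ord_conj by simp
  have i: "(g \<otimes> u \<otimes> inv g = g \<otimes> v \<otimes> inv g) \<longleftrightarrow> u = v"
    using assms by (metis inv_closed m_closed r_cancel l_cancel)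
  show ?thesis unfolding cox_adj_def cox_finite_def o i ..
qed

lemma adj_sym:
  assumes "u \<in> carrier G" "v \<in> carrier G"
  shows "cox_adj G u v = cox_adj G v u"
  using assms ord_swap unfolding cox_adj_def cox_finite_def cox_m_def by metis

lemma conj_in_generate:
  assumes "H \<subseteq> carrier G" "d \<in> carrier G" "a \<in> generate G H"
  shows "inv d \<otimes> a \<otimes> d \<in> generate G ((\<lambda>s. inv d \<otimes> s \<otimes> d) ` H)"
  using assms(3)
proof (induction rule: generate.induct)
  case one then show ?case using assms by (simp add: generate.one)
next
  case (incl h) then show ?case by (simp add: generate.incl)
next
  case (inv h)
  have hc: "h \<in> carrier G" using inv assms by auto
  have "inv d \<otimes> inv h \<otimes> d = inv (inv d \<otimes> h \<otimes> d)" using hc assms by (simp add: inv_mult_group m_assoc)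
  moreover have "inv d \<otimes> h \<otimes> d \<in> (\<lambda>s. inv d \<otimes> s \<otimes> d) ` H" using inv by simp
  ultimately show ?case by (simp add: generate.inv)
next
  case (eng h1 h2)
  have hc: "h1 \<in> carrier G" "h2 \<in> carrier G" using eng assms generate_in_carrier by auto
  have "inv d \<otimes> (h1 \<otimes> h2) \<otimes> d = (inv d \<otimes> h1 \<otimes> d) \<otimes> (inv d \<otimes> h2 \<otimes> d)"
    using hc assms by (simp add: m_assoc inv_cancel_left2)
  then show ?case using eng by (simp add: generate.eng)
qed

end


lemma (in group) main:
  fixes S S1 S0 S2 :: "'a set" and d :: 'a
  assumes cs: "coxeter_system G S"
    and ch: "cox_chordal G S"
    and sep: "cox_separation G S S1 S0 S2"
    and sx: "cox_simplex G S S0"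
    and dg: "d \<in> generate G S2"
    and dconj: "(\<lambda>s. inv d \<otimes> s \<otimes> d) ` S0 \<subseteq> S2"
  shows "cox_chordal G (S1 \<union> (\<lambda>s. d \<otimes> s \<otimes> inv d) ` S2)"
proof -
  have SU: "S = S1 \<union> S2" and S0: "S0 = S1 \<inter> S2"
    and cross: "\<forall>s\<in>S1 - S0. \<forall>t\<in>S2 - S0. \<not> cox_finite G s t"
    using sep unfolding cox_separation_def by auto
  have Sc: "S \<subseteq> carrier G" and invol: "\<forall>s\<in>S. s \<otimes> s = \<one>"
    using cs unfolding coxeter_system_def by auto
  have S2c: "S2 \<subseteq> carrier G" using Sc SU by auto
  have S0S: "S0 \<subseteq> S" using S0 SU by auto
  have S0c: "S0 \<subseteq> carrier G" using S0S Sc by auto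
  have dc: "d \<in> carrier G" using generate_in_carrier[OF S2c dg] .
  define XX where "XX = (\<lambda>s. d \<otimes> s \<otimes> inv d) ` S2"
  have XXc: "XX \<subseteq> carrier G" using S2c dc by (auto simp: XX_def)
  have bkw: "inv d \<otimes> (d \<otimes> t \<otimes> inv d) \<otimes> d = t" if "t \<in> carrier G" for t
    using that dc by (simp add: m_assoc inv_cancel_left)
  have fww: "d \<otimes> (inv d \<otimes> t \<otimes> d) \<otimes> inv d = t" if "t \<in> carrier G" for t
    using that dc by (simp add: m_assoc inv_cancel_left2)
  have XXbk: "inv d \<otimes> v \<otimes> d \<in> S2" if "v \<in> XX" for v
    using that bkw S2c by (auto simp: XX_def)
  have S0X: "S0 \<subseteq> XX"
  proof
    fix s0 assume s0: "s0 \<in> S0"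
    then have "inv d \<otimes> s0 \<otimes> d \<in> S2" using dconj by auto
    moreover have "s0 = d \<otimes> (inv d \<otimes> s0 \<otimes> d) \<otimes> inv d" using fww s0 S0c by auto
    ultimately show "s0 \<in> XX" unfolding XX_def by blast
  qed
  define A where "A = generate G S0"
  have am: "amal G A" unfolding amal_def amal_axioms_def A_def
    using is_group generate_is_subgroup[OF S0c] by simp
  have cross': "\<forall>s\<in>S1-S2. \<forall>t\<in>S2-S1. \<not> cox_finite G s t \<and> \<not> cox_finite G t s"
  proof (intro ballI)
    fix s t assume st: "s \<in> S1 - S2" "t \<in> S2 - S1"
    then have "\<not> cox_finite G s t" using cross S0 by auto
    moreover have "cox_m G t s = cox_m G s t" using cox_m_sym[OF cs] st SU by auto
    ultimately show "\<not> cox_finite G s t \<and> \<not> cox_finite G t s" by (simp add: cox_finite_def)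
  qed
  have S0A: "S1 \<inter> S2 \<subseteq> A"
  proof
    fix x assume "x \<in> S1 \<inter> S2"
    then have "x \<in> S0" using S0 by simp
    then show "x \<in> A" unfolding A_def by (rule generate.incl)
  qed
  have key: "\<not> cox_adj G x v \<and> \<not> cox_adj G v x" if x: "x \<in> S1 - S0" and v: "v \<in> XX" "v \<notin> S1" for x v
  proof -
    obtain t where t: "t \<in> S2" "v = d \<otimes> t \<otimes> inv d" using v unfolding XX_def by blast
    have tc: "t \<in> carrier G" using t S2c by auto
    have xS: "x \<in> S" using x SU by auto
    have xA: "x \<notin> A"
    proof
      assume "x \<in> A"
      then have "x \<in> generate G S0" by (simp only: A_def)
      then have "x \<in> S0" by (rule parabolic_simple[OF cs S0S xS])
      moreover have "x \<notin> S0" using x by simp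
      ultimately show False by contradiction
    qed
    have vg: "v \<in> generate G S2"
    proof -
      have "t \<in> generate G S2" using t(1) by (rule generate.incl)
      then have "d \<otimes> t \<in> generate G S2" using dg by (rule generate.eng[rotated])
      moreover have "inv d \<in> generate G S2" using generate_m_inv_closed[OF S2c dg] .
      ultimately have "d \<otimes> t \<otimes> inv d \<in> generate G S2" by (rule generate.eng)
      then show ?thesis using t(2) by simp
    qed
    have vA: "v \<notin> A"
    proof
      assume "v \<in> A"
      define T where "T = (\<lambda>s. inv d \<otimes> s \<otimes> d) ` S0"
      have "inv d \<otimes> v \<otimes> d \<in> generate G T"
        using conj_in_generate[OF S0c dc] \<open>v \<in> A\<close> by (simp add: A_def T_def)
      moreover have "inv d \<otimes> v \<otimes> d = t" using bkw tc t by simp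
      ultimately have tT: "t \<in> generate G T" by simp
      have TS: "T \<subseteq> S" using dconj SU by (auto simp: T_def)
      have "t \<in> T" using parabolic_simple[OF cs TS _ tT] t SU by auto
      then obtain s0 where s0: "s0 \<in> S0" "t = inv d \<otimes> s0 \<otimes> d" by (auto simp: T_def)
      then have "v = s0" using t fww S0c by auto
      then show False using v s0 S0 by auto
    qed
    have "ord (x \<otimes> v) = 0"
      using amal.infinite_order[OF am cs SU S0A cross' _ xA vg vA] x by auto
    then have "\<not> cox_adj G x v" by (simp add: cox_adj_def cox_finite_def cox_m_def)
    moreover have "x \<in> carrier G" "v \<in> carrier G" using xS Sc v XXc by auto
    ultimately show ?thesis using adj_sym by blast
  qed
  show ?thesis
    unfolding cox_chordal_def XX_def[symmetric]
  proof (intro allI impI)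
    fix vs :: "'a list"
    assume H: "distinct vs \<and> 4 \<le> length vs \<and> set vs \<subseteq> S1 \<union> XX \<and>
        (\<forall>i<length vs. cox_adj G (vs ! i) (vs ! ((i + 1) mod length vs)))"
    then have dist: "distinct vs" and n4: "4 \<le> length vs" and sv: "set vs \<subseteq> S1 \<union> XX"
      and cyc: "\<forall>i<length vs. cox_adj G (vs ! i) (vs ! ((i + 1) mod length vs))" by auto
    show "\<exists>i j. i < length vs \<and> j < length vs \<and> i \<noteq> j \<and> j \<noteq> (i + 1) mod length vs \<and>
        i \<noteq> (j + 1) mod length vs \<and> cox_adj G (vs ! i) (vs ! j)"
    proof (cases "set vs \<subseteq> S1")
      case True
      then have "set vs \<subseteq> S" using SU by auto
      then show ?thesis using ch H unfolding cox_chordal_def by blast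
    next
      case notS1: False
      show ?thesis
      proof (cases "set vs \<subseteq> XX")
        case True
        define vs' where "vs' = map (\<lambda>v. inv d \<otimes> v \<otimes> d) vs"
        have len: "length vs' = length vs" by (simp add: vs'_def)
        have nth': "vs' ! k = inv d \<otimes> (vs ! k) \<otimes> d" if "k < length vs" for k
          using that by (simp add: vs'_def)
        have vc: "vs ! k \<in> carrier G" if "k < length vs" for k using that True XXc nth_mem by blast
        have adjeq: "cox_adj G (vs' ! k) (vs' ! l) = cox_adj G (vs ! k) (vs ! l)"
          if "k < length vs" "l < length vs" for k l
          using conj_adj[of "inv d" "vs ! k" "vs ! l"] dc vc that nth' by simp
        have "set vs' \<subseteq> S" using True XXbk SU by (auto simp: vs'_def)
        moreover have "distinct vs'"
        proof -
          have "inj_on (\<lambda>v. inv d \<otimes> v \<otimes> d) (set vs)"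
          proof (rule inj_onI)
            fix u v assume uv: "u \<in> set vs" "v \<in> set vs" "inv d \<otimes> u \<otimes> d = inv d \<otimes> v \<otimes> d"
            have "u \<in> carrier G" "v \<in> carrier G" using uv True XXc by auto
            then show "u = v" using uv(3) dc by (metis inv_closed m_closed r_cancel l_cancel)
          qed
          then show ?thesis using dist by (simp add: vs'_def distinct_map)
        qed
        moreover have "\<forall>i<length vs'. cox_adj G (vs' ! i) (vs' ! ((i + 1) mod length vs'))"
        proof (intro allI impI)
          fix i assume i: "i < length vs'"
          have m: "(i + 1) mod length vs < length vs" using n4 by (intro mod_less_divisor) linarith
          have "cox_adj G (vs ! i) (vs ! ((i + 1) mod length vs))" using cyc i len by simp
          then show "cox_adj G (vs' ! i) (vs' ! ((i + 1) mod length vs'))"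
            using adjeq[OF _ m, of i] i len by simp
        qed
        ultimately obtain i j where ij: "i < length vs'" "j < length vs'" "i \<noteq> j"
          "j \<noteq> (i + 1) mod length vs'" "i \<noteq> (j + 1) mod length vs'" "cox_adj G (vs' ! i) (vs' ! j)"
          using ch n4 len unfolding cox_chordal_def by metis
        then show ?thesis using adjeq len by (intro exI[of _ i] exI[of _ j]) auto
      next
        case notX: False
        obtain u where u: "u \<in> set vs" "u \<notin> XX" using notX by blast
        then obtain i where i0: "i < length vs" "vs ! i = u" by (auto simp: in_set_conv_nth)
        then have i: "i < length vs" "vs ! i \<notin> XX" using u by auto
        obtain u' where u': "u' \<in> set vs" "u' \<notin> S1" using notS1 by blast
        then obtain j where j0: "j < length vs" "vs ! j = u'" by (auto simp: in_set_conv_nth)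
        then have j: "j < length vs" "vs ! j \<notin> S1" using u' by auto
        define Lp where "Lp u = (u \<in> S1 - S0)" for u
        define Rp where "Rp u = (u \<notin> S1 \<and> u \<in> XX)" for u
        have vi: "vs ! i \<in> S1 \<union> XX" using sv nth_mem[OF i(1)] by blast
        have vj: "vs ! j \<in> S1 \<union> XX" using sv nth_mem[OF j(1)] by blast
        have Li: "Lp (vs ! i)" using i vi S0X by (auto simp: Lp_def)
        have Rj: "Rp (vs ! j)" using j vj by (auto simp: Rp_def)
        have noLR: "\<forall>u v. Lp u \<and> Rp v \<longrightarrow> \<not> cox_adj G u v \<and> \<not> cox_adj G v u"
          using key by (auto simp: Lp_def Rp_def)
        have disj: "\<forall>u. \<not> (Lp u \<and> Rp u)" by (auto simp: Lp_def Rp_def)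
        obtain p q where pq: "p < length vs" "q < length vs" "p \<noteq> q" "q \<noteq> (p + 1) mod length vs"
          "p \<noteq> (q + 1) mod length vs" "\<not> Lp (vs ! p)" "\<not> Rp (vs ! p)" "\<not> Lp (vs ! q)" "\<not> Rp (vs ! q)"
          using cycle_chord[OF n4 cyc noLR disj i(1) Li j(1) Rj] by blast
        have inS0: "vs ! k \<in> S0" if "k < length vs" "\<not> Lp (vs ! k)" "\<not> Rp (vs ! k)" for k
        proof -
          have "vs ! k \<in> S1 \<union> XX" using sv nth_mem[OF that(1)] by blast
          then show ?thesis using that(2,3) by (auto simp: Lp_def Rp_def)
        qed
        have "vs ! p \<in> S0" "vs ! q \<in> S0" using inS0 pq by auto
        moreover have "vs ! p \<noteq> vs ! q" using dist pq nth_eq_iff_index_eq by blast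
        ultimately have "cox_adj G (vs ! p) (vs ! q)"
          using sx unfolding cox_simplex_def cox_adj_def by blast
        then show ?thesis using pq by blast
      qed
    qed
  qed
qed

theorem lemma3p2:
  fixes W :: "('a, 'b) monoid_scheme" and S S1 S0 S2 :: "'a set" and d :: 'a
  assumes "coxeter_system W S"
    and "cox_chordal W S"
    and "cox_separation W S S1 S0 S2"
    and "cox_simplex W S S0"
    and "d \<in> generate W S2"
    and "(\<lambda>s. inv\<^bsub>W\<^esub> d \<otimes>\<^bsub>W\<^esub> s \<otimes>\<^bsub>W\<^esub> d) ` S0 \<subseteq> S2"
  shows "cox_chordal W (S1 \<union> (\<lambda>s. d \<otimes>\<^bsub>W\<^esub> s \<otimes>\<^bsub>W\<^esub> inv\<^bsub>W\<^esub> d) ` S2)"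
  using group.main[OF coxeter_group[OF assms(1)] assms] .


end
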